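(* Let $N=\{1,\ldots,n\}$, $\mathcal{X}=\{-1,1\}^n$, and fix $p^\circ\in\Delta(\mathcal{X})$ with $p^\circ(x)>0$ for all $x\in\mathcal{X}$. For a deterministic voting rule $\phi:\mathcal{X}\to\{-1,1\}$: (1) $\phi$ is strictly efficient under $p^\circ$ if and only if it is a weighted majority rule with nonnegative weights such that there are no ties; (2) $\phi$ is efficient under $p^\circ$ if and only if it is a weighted majority rule with positive weights; (3) $\phi$ is weakly efficient under $p^\circ$ if and only if it is a weighted majority rule with nonnegative weights.
   Context: A random voting rule is a map $\bar\phi:\mathcal{X}\to[-1,1]$ (outcome $1$ with probability $(1+\bar\phi(x))/2$, else $-1$); deterministic rules are special cases. Under $p$, individual $i$'s responsiveness to $\bar\phi$ is $(E_p[\bar\phi(x)x_i]+1)/2$. A rule $\psi$ is weakly Pareto-preferred to $\phi$ under $p$ if every individual's responsiveness under $\psi$ is $\geq$ that under $\phi$; Pareto-preferred if additionally strict for at least one individual; strictly Pareto-preferred if strict for all individuals. $\phi$ is strictly efficient under $p$ if no other random rule is weakly Pareto-preferred to it; efficient if no random rule is Pareto-preferred to it; weakly efficient if no random rule is strictly Pareto-preferred to it. A weighted majority rule with nonzero weight vector $w\in\mathbb{R}^n$ satisfies $\phi(x)=1$ if $\sum_iw_ix_i>0$ and $\phi(x)=-1$ if $\sum_iw_ix_i<0$ (ties resolved arbitrarily); it has no ties if $\sum_iw_ix_i\neq0$ for all $x$. *)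

theory Defs
  imports Complex_Main
begin

text \<open>Individuals are the elements of a finite nonempty index type 'i (so n = CARD('i) \<ge> 1).
  A profile is a function 'i \<Rightarrow> real with every entry equal to -1 or 1.\<close>

definition profiles :: "('i::finite \<Rightarrow> real) set" where
  "profiles = {x. \<forall>i. x i = -1 \<or> x i = 1}"

definition is_dist :: "(('i::finite \<Rightarrow> real) \<Rightarrow> real) \<Rightarrow> bool" where
  "is_dist p \<longleftrightarrow> (\<forall>x\<in>profiles. p x \<ge> 0) \<and> (\<Sum>x\<in>profiles. p x) = 1"

definition random_rule :: "(('i::finite \<Rightarrow> real) \<Rightarrow> real) \<Rightarrow> bool" where
  "random_rule \<phi> \<longleftrightarrow> (\<forall>x\<in>profiles. -1 \<le> \<phi> x \<and> \<phi> x \<le> 1)"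

definition det_rule :: "(('i::finite \<Rightarrow> real) \<Rightarrow> real) \<Rightarrow> bool" where
  "det_rule \<phi> \<longleftrightarrow> (\<forall>x\<in>profiles. \<phi> x = -1 \<or> \<phi> x = 1)"

definition resp :: "(('i::finite \<Rightarrow> real) \<Rightarrow> real) \<Rightarrow> (('i \<Rightarrow> real) \<Rightarrow> real) \<Rightarrow> 'i \<Rightarrow> real" where
  "resp p \<phi> i = ((\<Sum>x\<in>profiles. p x * \<phi> x * x i) + 1) / 2"

definition weakly_pareto_pref where
  "weakly_pareto_pref p \<psi> \<phi> \<longleftrightarrow> (\<forall>i. resp p \<psi> i \<ge> resp p \<phi> i)"

definition pareto_pref where
  "pareto_pref p \<psi> \<phi> \<longleftrightarrow> weakly_pareto_pref p \<psi> \<phi> \<and> (\<exists>i. resp p \<psi> i > resp p \<phi> i)"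

definition strictly_pareto_pref where
  "strictly_pareto_pref p \<psi> \<phi> \<longleftrightarrow> (\<forall>i. resp p \<psi> i > resp p \<phi> i)"

text \<open>Rules are identified by their values on profiles; "another rule" means one differing
  from \<phi> at some profile.\<close>

definition strictly_efficient where
  "strictly_efficient p \<phi> \<longleftrightarrow>
     \<not> (\<exists>\<psi>. random_rule \<psi> \<and> (\<exists>x\<in>profiles. \<psi> x \<noteq> \<phi> x) \<and> weakly_pareto_pref p \<psi> \<phi>)"

definition efficient where
  "efficient p \<phi> \<longleftrightarrow> \<not> (\<exists>\<psi>. random_rule \<psi> \<and> pareto_pref p \<psi> \<phi>)"

definition weakly_efficient where
  "weakly_efficient p \<phi> \<longleftrightarrow> \<not> (\<exists>\<psi>. random_rule \<psi> \<and> strictly_pareto_pref p \<psi> \<phi>)"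

definition weighted_majority :: "('i::finite \<Rightarrow> real) \<Rightarrow> (('i \<Rightarrow> real) \<Rightarrow> real) \<Rightarrow> bool" where
  "weighted_majority w \<phi> \<longleftrightarrow> w \<noteq> (\<lambda>_. 0) \<and>
     (\<forall>x\<in>profiles. ((\<Sum>i\<in>UNIV. w i * x i) > 0 \<longrightarrow> \<phi> x = 1) \<and>
                    ((\<Sum>i\<in>UNIV. w i * x i) < 0 \<longrightarrow> \<phi> x = -1))"

definition no_ties :: "('i::finite \<Rightarrow> real) \<Rightarrow> bool" where
  "no_ties w \<longleftrightarrow> (\<forall>x\<in>profiles. (\<Sum>i\<in>UNIV. w i * x i) \<noteq> 0)"

end

theory Submission
  imports Defs "HOL-Analysis.Analysis"
begin

lemma alt_lemma:
  fixes z :: "'a::euclidean_space"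
  assumes "finite G" "z \<notin> convex_cone hull G"
  shows "\<exists>w. inner w z < 0 \<and> (\<forall>g\<in>G. inner w g \<ge> 0)"
proof -
  obtain a b where ab: "inner a z < b" "\<forall>x\<in>convex_cone hull G. inner a x > b"
    using separating_hyperplane_closed_point[OF convex_convex_cone_hull
        closed_convex_cone_hull[OF assms(1)] assms(2)] by blast
  have b0: "b < 0" using ab(2) convex_cone_hull_contains_0 by fastforce
  have "inner a g \<ge> 0" if g: "g \<in> G" for g
  proof (rule ccontr)
    assume n: "\<not> inner a g \<ge> 0"
    define c where "c = b / inner a g"
    have c0: "c \<ge> 0" using n b0 by (simp add: c_def divide_nonpos_neg)
    have "c *\<^sub>R g \<in> convex_cone hull G"
      using convex_cone_hull_mul[OF hull_inc[OF g] c0] .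
    then have "inner a (c *\<^sub>R g) > b" using ab(2) by blast
    moreover have "inner a (c *\<^sub>R g) = b" using n by (simp add: c_def)
    ultimately show False by simp
  qed
  then show ?thesis using ab(1) b0 by (intro exI[of _ a]) auto
qed

lemma profiles_PiE: "(profiles :: ('i::finite \<Rightarrow> real) set) = Pi\<^sub>E UNIV (\<lambda>_. {-1,1})"
  by (auto simp: profiles_def PiE_def extensional_def)

lemma finite_profiles: "finite (profiles :: ('i::finite \<Rightarrow> real) set)"
  by (simp add: profiles_PiE finite_PiE)

lemma profiles_ne: "(\<lambda>_. 1) \<in> profiles"
  by (simp add: profiles_def)

definition avec :: "(('i::finite \<Rightarrow> real) \<Rightarrow> real) \<Rightarrow> (('i \<Rightarrow> real) \<Rightarrow> real) \<Rightarrow> ('i \<Rightarrow> real) \<Rightarrow> real^'i"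
  where "avec p \<phi> x = (\<chi> i. p x * \<phi> x * x i)"

definition gens :: "(('i::finite \<Rightarrow> real) \<Rightarrow> real) \<Rightarrow> (('i \<Rightarrow> real) \<Rightarrow> real) \<Rightarrow> (real^'i) set"
  where "gens p \<phi> = avec p \<phi> ` profiles \<union> range (\<lambda>i. axis i 1)"

lemma finite_gens: "finite (gens p \<phi>)"
  by (simp add: gens_def finite_profiles)

lemma hull_repr:
  assumes "z \<in> convex_cone hull (gens p \<phi>)"
  shows "\<exists>l m. (\<forall>x\<in>profiles. l x \<ge> 0) \<and> (\<forall>i. m i \<ge> (0::real)) \<and>
     (\<forall>i. z $ i = (\<Sum>x\<in>profiles. l x * (p x * \<phi> x * x i)) + m i)"
proof -
  define Cn where "Cn = {z::real^'a. \<exists>l m. (\<forall>x\<in>profiles. l x \<ge> 0) \<and> (\<forall>i. m i \<ge> (0::real)) \<and>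
     (\<forall>i. z $ i = (\<Sum>x\<in>profiles. l x * (p x * \<phi> x * x i)) + m i)}"
  have "convex_cone Cn"
    unfolding convex_cone_iff
  proof (intro conjI ballI allI impI)
    show "0 \<in> Cn" unfolding Cn_def by (rule CollectI, rule exI[of _ "\<lambda>_. 0"], rule exI[of _ "\<lambda>_. 0"]) simp
  next
    fix u v assume "u \<in> Cn" "v \<in> Cn"
    then obtain l1 m1 l2 m2 where
      1: "(\<forall>x\<in>profiles. l1 x \<ge> 0) \<and> (\<forall>i. m1 i \<ge> (0::real)) \<and>
     (\<forall>i. u $ i = (\<Sum>x\<in>profiles. l1 x * (p x * \<phi> x * x i)) + m1 i)" and
      2: "(\<forall>x\<in>profiles. l2 x \<ge> 0) \<and> (\<forall>i. m2 i \<ge> (0::real)) \<and>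
     (\<forall>i. v $ i = (\<Sum>x\<in>profiles. l2 x * (p x * \<phi> x * x i)) + m2 i)"
      unfolding Cn_def by blast
    show "u + v \<in> Cn" unfolding Cn_def
      apply (rule CollectI, rule exI[of _ "\<lambda>x. l1 x + l2 x"], rule exI[of _ "\<lambda>i. m1 i + m2 i"])
      using 1 2 by (auto simp: distrib_right sum.distrib)
  next
    fix u and c :: real assume "u \<in> Cn" "c \<ge> 0"
    then obtain l1 m1 where
      1: "(\<forall>x\<in>profiles. l1 x \<ge> 0) \<and> (\<forall>i. m1 i \<ge> (0::real)) \<and>
     (\<forall>i. u $ i = (\<Sum>x\<in>profiles. l1 x * (p x * \<phi> x * x i)) + m1 i)"
      unfolding Cn_def by blast
    show "c *\<^sub>R u \<in> Cn" unfolding Cn_def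
      apply (rule CollectI, rule exI[of _ "\<lambda>x. c * l1 x"], rule exI[of _ "\<lambda>i. c * m1 i"])
      using 1 \<open>c \<ge> 0\<close> by (auto simp: distrib_left sum_distrib_left mult.assoc)
  qed
  moreover have "gens p \<phi> \<subseteq> Cn"
  proof
    fix g assume "g \<in> gens p \<phi>"
    then consider y where "y \<in> profiles" "g = avec p \<phi> y" | j where "g = axis j 1"
      unfolding gens_def by blast
    then show "g \<in> Cn"
    proof cases
      case 1
      show ?thesis unfolding Cn_def
        apply (rule CollectI, rule exI[of _ "\<lambda>x. if x = y then 1 else 0"], rule exI[of _ "\<lambda>_. 0"])
        using 1 by (auto simp: avec_def if_distrib[where f="\<lambda>a. a * _"] sum.delta[OF finite_profiles] sum.delta'[OF finite_profiles] cong: if_cong)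
    next
      case 2
      show ?thesis unfolding Cn_def
        apply (rule CollectI, rule exI[of _ "\<lambda>x. 0"], rule exI[of _ "\<lambda>i. if i = j then 1 else 0"])
        using 2 by (auto simp: axis_def)
    qed
  qed
  ultimately have "convex_cone hull (gens p \<phi>) \<subseteq> Cn" by (rule hull_minimal[rotated])
  then show ?thesis using assms unfolding Cn_def by blast
qed


lemma resp_diff:
  "resp p \<psi> i - resp p \<phi> i = (\<Sum>x\<in>profiles. p x * (\<psi> x - \<phi> x) * x i) / 2"
proof -
  have "(\<Sum>x\<in>profiles. p x * (\<psi> x - \<phi> x) * x i) = (\<Sum>x\<in>profiles. p x * \<psi> x * x i) - (\<Sum>x\<in>profiles. p x * \<phi> x * x i)"
    by (simp add: sum_subtractf[symmetric] algebra_simps)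
  then show ?thesis unfolding resp_def by (simp add: field_simps)
qed

lemma improve:
  fixes l :: "('i::finite \<Rightarrow> real) \<Rightarrow> real" and \<phi> :: "('i \<Rightarrow> real) \<Rightarrow> real" and p :: "('i \<Rightarrow> real) \<Rightarrow> real"
  assumes det: "det_rule \<phi>" and l0: "\<forall>x\<in>profiles. l x \<ge> 0"
  defines "M \<equiv> 1 + (\<Sum>x\<in>profiles. l x)"
  defines "\<psi> \<equiv> (\<lambda>x. \<phi> x * (1 - l x / M))"
  shows "M > 0" "random_rule \<psi>"
    "\<forall>i. resp p \<psi> i - resp p \<phi> i = - (\<Sum>x\<in>profiles. l x * (p x * \<phi> x * x i)) / (2 * M)"
    "\<forall>x\<in>profiles. l x > 0 \<longrightarrow> \<psi> x \<noteq> \<phi> x"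
proof -
  have lM: "l x < M" if "x \<in> profiles" for x
  proof -
    have "l x \<le> (\<Sum>x\<in>profiles. l x)"
      by (rule member_le_sum[OF that]) (use l0 finite_profiles in auto)
    then show ?thesis unfolding M_def by simp
  qed
  have s0: "(\<Sum>x\<in>profiles. l x) \<ge> 0" using l0 by (simp add: sum_nonneg)
  then show M0: "M > 0" unfolding M_def by simp
  have q: "0 \<le> l x / M \<and> l x / M < 1" if "x \<in> profiles" for x
    using lM[OF that] M0 l0 that by (auto simp: divide_simps)
  show "random_rule \<psi>" unfolding random_rule_def \<psi>_def
  proof
    fix x :: "'i \<Rightarrow> real" assume x: "x \<in> profiles"
    from det x have "\<phi> x = -1 \<or> \<phi> x = 1" by (auto simp: det_rule_def)
    then show "- 1 \<le> \<phi> x * (1 - l x / M) \<and> \<phi> x * (1 - l x / M) \<le> 1" using q[OF x] by auto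
  qed
  show "\<forall>i. resp p \<psi> i - resp p \<phi> i = - (\<Sum>x\<in>profiles. l x * (p x * \<phi> x * x i)) / (2 * M)"
  proof
    fix i
    have "resp p \<psi> i - resp p \<phi> i = (\<Sum>x\<in>profiles. p x * (\<psi> x - \<phi> x) * x i) / 2" by (rule resp_diff)
    also have "\<dots> = (\<Sum>x\<in>profiles. - (l x * (p x * \<phi> x * x i)) / M) / 2"
      unfolding \<psi>_def by (rule arg_cong[where f="\<lambda>t. t / 2"], rule sum.cong) (auto simp: algebra_simps diff_divide_distrib)
    also have "\<dots> = - (\<Sum>x\<in>profiles. l x * (p x * \<phi> x * x i)) / (2 * M)"
      by (simp add: sum_divide_distrib[symmetric] sum_negf)
    finally show "resp p \<psi> i - resp p \<phi> i = - (\<Sum>x\<in>profiles. l x * (p x * \<phi> x * x i)) / (2 * M)" .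
  qed
  show "\<forall>x\<in>profiles. l x > 0 \<longrightarrow> \<psi> x \<noteq> \<phi> x"
  proof (intro ballI impI)
    fix x :: "'i \<Rightarrow> real" assume x: "x \<in> profiles" and lx: "l x > 0"
    from det x have "\<phi> x \<noteq> 0" by (auto simp: det_rule_def)
    moreover have "l x / M \<noteq> 0" using lx M0 by simp
    ultimately show "\<psi> x \<noteq> \<phi> x" unfolding \<psi>_def by (simp add: algebra_simps)
  qed
qed

lemma wsum_resp:
  "(\<Sum>i\<in>UNIV. w i * (resp p \<psi> i - resp p \<phi> i)) =
     (\<Sum>x\<in>profiles. p x * (\<psi> x - \<phi> x) * (\<Sum>i\<in>UNIV. w i * x i)) / 2"
proof -
  have "(\<Sum>i\<in>UNIV. w i * (resp p \<psi> i - resp p \<phi> i)) =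
     (\<Sum>i\<in>UNIV. \<Sum>x\<in>profiles. w i * (p x * (\<psi> x - \<phi> x) * x i)) / 2"
    by (simp add: resp_diff sum_distrib_left sum_divide_distrib)
  also have "\<dots> = (\<Sum>x\<in>profiles. \<Sum>i\<in>UNIV. w i * (p x * (\<psi> x - \<phi> x) * x i)) / 2"
    by (simp add: sum.swap[where A=UNIV])
  also have "\<dots> = (\<Sum>x\<in>profiles. p x * (\<psi> x - \<phi> x) * (\<Sum>i\<in>UNIV. w i * x i)) / 2"
    by (intro arg_cong[where f="\<lambda>t. t / 2"] sum.cong refl) (simp add: sum_distrib_left mult_ac)
  finally show ?thesis .
qed

lemma conv_le:
  assumes wm: "weighted_majority w \<phi>" and rr: "random_rule \<psi>" and p0: "\<forall>x\<in>profiles. p x > 0"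
  shows "(\<Sum>i\<in>UNIV. w i * (resp p \<psi> i - resp p \<phi> i)) \<le> 0"
    "no_ties w \<Longrightarrow> \<exists>x\<in>profiles. \<psi> x \<noteq> \<phi> x \<Longrightarrow> (\<Sum>i\<in>UNIV. w i * (resp p \<psi> i - resp p \<phi> i)) < 0"
proof -
  have term_le: "p x * (\<psi> x - \<phi> x) * (\<Sum>i\<in>UNIV. w i * x i) \<le> 0" if x: "x \<in> profiles" for x
  proof -
    have px: "p x > 0" using p0 x by auto
    have r: "-1 \<le> \<psi> x" "\<psi> x \<le> 1" using rr x by (auto simp: random_rule_def)
    consider "(\<Sum>i\<in>UNIV. w i * x i) > 0" | "(\<Sum>i\<in>UNIV. w i * x i) < 0" | "(\<Sum>i\<in>UNIV. w i * x i) = 0" by linarith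
    then show ?thesis
    proof cases
      case 1
      then have "\<phi> x = 1" using wm x by (auto simp: weighted_majority_def)
      then show ?thesis using 1 px r by (simp add: mult_nonpos_nonneg mult_nonneg_nonpos)
    next
      case 2
      then have "\<phi> x = -1" using wm x by (auto simp: weighted_majority_def)
      then show ?thesis using 2 px r by (simp add: mult_nonneg_nonpos)
    qed simp
  qed
  show "(\<Sum>i\<in>UNIV. w i * (resp p \<psi> i - resp p \<phi> i)) \<le> 0"
    unfolding wsum_resp using term_le by (simp add: sum_nonpos)
  assume nt: "no_ties w" and ex: "\<exists>x\<in>profiles. \<psi> x \<noteq> \<phi> x"
  then obtain y where y: "y \<in> profiles" "\<psi> y \<noteq> \<phi> y" by blast
  have "p y * (\<psi> y - \<phi> y) * (\<Sum>i\<in>UNIV. w i * y i) < 0"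
  proof -
    have py: "p y > 0" using p0 y by auto
    have r: "-1 \<le> \<psi> y" "\<psi> y \<le> 1" using rr y by (auto simp: random_rule_def)
    have "(\<Sum>i\<in>UNIV. w i * y i) \<noteq> 0" using nt y by (auto simp: no_ties_def)
    then consider "(\<Sum>i\<in>UNIV. w i * y i) > 0" | "(\<Sum>i\<in>UNIV. w i * y i) < 0" by linarith
    then show ?thesis
    proof cases
      case 1
      then have "\<phi> y = 1" using wm y by (auto simp: weighted_majority_def)
      then have "\<psi> y - \<phi> y < 0" using r y by auto
      then show ?thesis using 1 py by (simp add: mult_pos_neg mult_neg_pos)
    next
      case 2
      then have "\<phi> y = -1" using wm y by (auto simp: weighted_majority_def)
      then have "\<psi> y - \<phi> y > 0" using r y by auto
      then show ?thesis using 2 py by (simp add: mult_pos_neg)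
    qed
  qed
  then have "0 < (\<Sum>x\<in>profiles. - (p x * (\<psi> x - \<phi> x) * (\<Sum>i\<in>UNIV. w i * x i)))"
    by (intro sum_pos2[OF finite_profiles y(1)]) (use term_le in auto)
  then show "(\<Sum>i\<in>UNIV. w i * (resp p \<psi> i - resp p \<phi> i)) < 0"
    unfolding wsum_resp by (simp add: sum_negf)
qed


lemma inner_avec: "inner wv (avec p \<phi> x) = p x * \<phi> x * (\<Sum>i\<in>UNIV. wv $ i * x i)"
  by (simp add: avec_def inner_vec_def sum_distrib_left mult_ac)

lemma inner_axis1: "inner wv (axis i (1::real)) = wv $ i"
  by (simp add: inner_axis)

lemma fwd_wm:
  fixes wv :: "real^'i::finite"
  assumes det: "det_rule \<phi>" and p0: "\<forall>x\<in>profiles. p x > 0"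
    and ne: "(\<lambda>i. wv $ i) \<noteq> (\<lambda>_. 0)"
    and ia: "\<forall>x\<in>profiles. inner wv (avec p \<phi> x) \<ge> 0"
  shows "weighted_majority (\<lambda>i. wv $ i) \<phi>"
  unfolding weighted_majority_def
proof (intro conjI ne ballI impI)
  fix x :: "'i \<Rightarrow> real" assume x: "x \<in> profiles"
  have px: "p x > 0" using p0 x by auto
  have ph: "\<phi> x = -1 \<or> \<phi> x = 1" using det x by (auto simp: det_rule_def)
  have h: "p x * \<phi> x * (\<Sum>i\<in>UNIV. wv $ i * x i) \<ge> 0" using ia x by (simp add: inner_avec)
  { assume s: "(\<Sum>i\<in>UNIV. wv $ i * x i) > 0"
    show "\<phi> x = 1"
    proof (rule ccontr)
      assume "\<phi> x \<noteq> 1" then have "\<phi> x = -1" using ph by auto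
      then have "p x * \<phi> x * (\<Sum>i\<in>UNIV. wv $ i * x i) < 0" using px s by (simp add: mult_pos_pos)
      then show False using h by simp
    qed }
  { assume s: "(\<Sum>i\<in>UNIV. wv $ i * x i) < 0"
    show "\<phi> x = -1"
    proof (rule ccontr)
      assume "\<phi> x \<noteq> -1" then have "\<phi> x = 1" using ph by auto
      then have "p x * \<phi> x * (\<Sum>i\<in>UNIV. wv $ i * x i) < 0" using px s by (simp add: mult_pos_neg)
      then show False using h by simp
    qed }
qed


lemma axis_in_gens: "axis i 1 \<in> gens p \<phi>"
  by (simp add: gens_def)

lemma avec_in_gens: "x \<in> profiles \<Longrightarrow> avec p \<phi> x \<in> gens p \<phi>"
  by (simp add: gens_def)

lemma weak_fwd:
  fixes p :: "('i::finite \<Rightarrow> real) \<Rightarrow> real" and \<phi> :: "('i \<Rightarrow> real) \<Rightarrow> real"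
  assumes det: "det_rule \<phi>" and p0: "\<forall>x\<in>profiles. p x > 0" and we: "weakly_efficient p \<phi>"
  shows "\<exists>w. weighted_majority w \<phi> \<and> (\<forall>i. w i \<ge> 0)"
proof -
  let ?z = "(\<chi> i. -1) :: real^'i"
  have "?z \<notin> convex_cone hull gens p \<phi>"
  proof
    assume "?z \<in> convex_cone hull gens p \<phi>"
    from hull_repr[OF this] obtain l m where l: "\<forall>x\<in>profiles. l x \<ge> 0" and m: "\<forall>i. m i \<ge> (0::real)"
      and eq: "\<forall>i. ?z $ i = (\<Sum>x\<in>profiles. l x * (p x * \<phi> x * x i)) + m i" by blast
    note I = improve[OF det l]
    define M where "M = 1 + sum l profiles"
    define \<psi> where "\<psi> = (\<lambda>x. \<phi> x * (1 - l x / M))"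
    have M0: "M > 0" using I(1) by (simp add: M_def)
    have "strictly_pareto_pref p \<psi> \<phi>" unfolding strictly_pareto_pref_def
    proof
      fix i
      have "resp p \<psi> i - resp p \<phi> i = - (\<Sum>x\<in>profiles. l x * (p x * \<phi> x * x i)) / (2 * M)"
        using I(3) by (simp add: \<psi>_def M_def)
      also have "\<dots> = (1 + m i) / (2 * M)"
      proof -
        have "(\<Sum>x\<in>profiles. l x * (p x * \<phi> x * x i)) = -1 - m i" using eq[rule_format, of i] by simp
        then show ?thesis using M0 by (simp add: field_simps)
      qed
      also have "\<dots> > 0" using M0 m by (simp add: add_pos_nonneg)
      finally show "resp p \<psi> i > resp p \<phi> i" by simp
    qed
    moreover have "random_rule \<psi>" using I(2) by (simp add: \<psi>_def M_def)
    ultimately show False using we unfolding weakly_efficient_def by blast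
  qed
  from alt_lemma[OF finite_gens this] obtain wv where
    wz: "inner wv ?z < 0" and wg: "\<forall>g\<in>gens p \<phi>. inner wv g \<ge> 0" by blast
  have nn: "\<forall>i. wv $ i \<ge> 0" using wg axis_in_gens inner_axis1 by metis
  have "(\<lambda>i. wv $ i) \<noteq> (\<lambda>_. 0)"
  proof
    assume "(\<lambda>i. wv $ i) = (\<lambda>_. 0)"
    then have "wv = 0" by (simp add: vec_eq_iff fun_eq_iff)
    then show False using wz by simp
  qed
  moreover have "\<forall>x\<in>profiles. inner wv (avec p \<phi> x) \<ge> 0" using wg avec_in_gens by blast
  ultimately have "weighted_majority (\<lambda>i. wv $ i) \<phi>" using fwd_wm[OF det p0] by blast
  then show ?thesis using nn by blast
qed

lemma weak_bwd:
  assumes p0: "\<forall>x\<in>profiles. p x > 0" and wm: "weighted_majority w \<phi>" and nn: "\<forall>i. w i \<ge> 0"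
  shows "weakly_efficient p \<phi>"
  unfolding weakly_efficient_def
proof
  assume "\<exists>\<psi>. random_rule \<psi> \<and> strictly_pareto_pref p \<psi> \<phi>"
  then obtain \<psi> where rr: "random_rule \<psi>" and sp: "strictly_pareto_pref p \<psi> \<phi>" by blast
  obtain j where j: "w j \<noteq> 0" using wm unfolding weighted_majority_def by auto
  have "0 < (\<Sum>i\<in>UNIV. w i * (resp p \<psi> i - resp p \<phi> i))"
  proof (rule sum_pos2[where i=j])
    show "0 < w j * (resp p \<psi> j - resp p \<phi> j)" using j nn[rule_format, of j] sp
      by (simp add: strictly_pareto_pref_def order_neq_le_trans)
    show "\<And>i. i \<in> UNIV \<Longrightarrow> 0 \<le> w i * (resp p \<psi> i - resp p \<phi> i)" using nn sp
      by (simp add: strictly_pareto_pref_def less_imp_le)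
  qed auto
  then show False using conv_le(1)[OF wm rr p0] by simp
qed


lemma eff_fwd:
  fixes p :: "('i::finite \<Rightarrow> real) \<Rightarrow> real" and \<phi> :: "('i \<Rightarrow> real) \<Rightarrow> real"
  assumes det: "det_rule \<phi>" and p0: "\<forall>x\<in>profiles. p x > 0" and ef: "efficient p \<phi>"
  shows "\<exists>w. weighted_majority w \<phi> \<and> (\<forall>i. w i > 0)"
proof -
  have "\<exists>wv. wv $ j > 0 \<and> (\<forall>i. wv $ i \<ge> 0) \<and> (\<forall>x\<in>profiles. inner wv (avec p \<phi> x) \<ge> 0)" for j
  proof -
    let ?z = "- axis j 1 :: real^'i"
    have "?z \<notin> convex_cone hull gens p \<phi>"
    proof
      assume "?z \<in> convex_cone hull gens p \<phi>"
      from hull_repr[OF this] obtain l m where l: "\<forall>x\<in>profiles. l x \<ge> 0" and m: "\<forall>i. m i \<ge> (0::real)"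
        and eq: "\<forall>i. ?z $ i = (\<Sum>x\<in>profiles. l x * (p x * \<phi> x * x i)) + m i" by blast
      note I = improve[OF det l]
      define M where "M = 1 + sum l profiles"
      define \<psi> where "\<psi> = (\<lambda>x. \<phi> x * (1 - l x / M))"
      have M0: "M > 0" using I(1) by (simp add: M_def)
      have d: "resp p \<psi> i - resp p \<phi> i = ((if i = j then 1 else 0) + m i) / (2 * M)" for i
      proof -
        have "resp p \<psi> i - resp p \<phi> i = - (\<Sum>x\<in>profiles. l x * (p x * \<phi> x * x i)) / (2 * M)"
          using I(3) by (simp add: \<psi>_def M_def)
        moreover have "(\<Sum>x\<in>profiles. l x * (p x * \<phi> x * x i)) = - (if i = j then 1 else 0) - m i"
          using eq[rule_format, of i] by (simp add: axis_def)
        ultimately show ?thesis using M0 by (simp add: field_simps)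
      qed
      have "pareto_pref p \<psi> \<phi>" unfolding pareto_pref_def weakly_pareto_pref_def
      proof (intro conjI allI exI[of _ j])
        fix i
        have "((if i = j then 1 else 0) + m i) / (2 * M) \<ge> 0" using M0 m[rule_format, of i] by simp
        then show "resp p \<phi> i \<le> resp p \<psi> i" using d[of i] by linarith
        have "((if j = j then 1 else 0) + m j) / (2 * M) > 0" using M0 m[rule_format, of j]
          by (simp add: add_pos_nonneg)
        then show "resp p \<phi> j < resp p \<psi> j" using d[of j] by linarith
      qed
      moreover have "random_rule \<psi>" using I(2) by (simp add: \<psi>_def M_def)
      ultimately show False using ef unfolding efficient_def by blast
    qed
    from alt_lemma[OF finite_gens this] obtain wv where
      wz: "inner wv ?z < 0" and wg: "\<forall>g\<in>gens p \<phi>. inner wv g \<ge> 0" by blast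
    have nn: "\<forall>i. wv $ i \<ge> 0" using wg axis_in_gens inner_axis1 by metis
    have "wv $ j > 0" using wz by (simp add: inner_axis1)
    moreover have "\<forall>x\<in>profiles. inner wv (avec p \<phi> x) \<ge> 0" using wg avec_in_gens by blast
    ultimately show ?thesis using nn by blast
  qed
  then obtain W where W: "\<forall>j. W j $ j > 0 \<and> (\<forall>i. W j $ i \<ge> 0) \<and> (\<forall>x\<in>profiles. inner (W j) (avec p \<phi> x) \<ge> 0)"
    by metis
  define wv where "wv = (\<Sum>j\<in>UNIV. W j)"
  have pos: "wv $ i > 0" for i
  proof -
    have "W i $ i \<le> (\<Sum>j\<in>UNIV. W j $ i)" by (rule member_le_sum) (use W in auto)
    then show ?thesis using W unfolding wv_def by (metis order_less_le_trans sum_component)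
  qed
  have "(\<lambda>i. wv $ i) \<noteq> (\<lambda>_. 0)" using pos by (metis less_irrefl)
  moreover have "\<forall>x\<in>profiles. inner wv (avec p \<phi> x) \<ge> 0"
    unfolding wv_def inner_sum_left using W by (simp add: sum_nonneg)
  ultimately have "weighted_majority (\<lambda>i. wv $ i) \<phi>" using fwd_wm[OF det p0] by blast
  then show ?thesis using pos by blast
qed

lemma eff_bwd:
  assumes p0: "\<forall>x\<in>profiles. p x > 0" and wm: "weighted_majority w \<phi>" and pos: "\<forall>i. w i > 0"
  shows "efficient p \<phi>"
  unfolding efficient_def
proof
  assume "\<exists>\<psi>. random_rule \<psi> \<and> pareto_pref p \<psi> \<phi>"
  then obtain \<psi> where rr: "random_rule \<psi>" and sp: "pareto_pref p \<psi> \<phi>" by blast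
  then obtain j where j: "resp p \<psi> j > resp p \<phi> j" unfolding pareto_pref_def by blast
  have "0 < (\<Sum>i\<in>UNIV. w i * (resp p \<psi> i - resp p \<phi> i))"
  proof (rule sum_pos2[where i=j])
    show "0 < w j * (resp p \<psi> j - resp p \<phi> j)" using j pos by simp
    show "\<And>i. i \<in> UNIV \<Longrightarrow> 0 \<le> w i * (resp p \<psi> i - resp p \<phi> i)" using pos sp
      by (simp add: pareto_pref_def weakly_pareto_pref_def less_imp_le)
  qed auto
  then show False using conv_le(1)[OF wm rr p0] by simp
qed


lemma strict_fwd:
  fixes p :: "('i::finite \<Rightarrow> real) \<Rightarrow> real" and \<phi> :: "('i \<Rightarrow> real) \<Rightarrow> real"
  assumes det: "det_rule \<phi>" and p0: "\<forall>x\<in>profiles. p x > 0" and se: "strictly_efficient p \<phi>"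
  shows "\<exists>w. weighted_majority w \<phi> \<and> (\<forall>i. w i \<ge> 0) \<and> no_ties w"
proof -
  have "\<exists>wv. inner wv (avec p \<phi> y) > 0 \<and> (\<forall>i. wv $ i \<ge> 0) \<and> (\<forall>x\<in>profiles. inner wv (avec p \<phi> x) \<ge> 0)"
    if y: "y \<in> profiles" for y
  proof -
    let ?z = "- avec p \<phi> y"
    have "?z \<notin> convex_cone hull gens p \<phi>"
    proof
      assume "?z \<in> convex_cone hull gens p \<phi>"
      from hull_repr[OF this] obtain l0 m where l0: "\<forall>x\<in>profiles. l0 x \<ge> 0" and m: "\<forall>i. m i \<ge> (0::real)"
        and eq: "\<forall>i. ?z $ i = (\<Sum>x\<in>profiles. l0 x * (p x * \<phi> x * x i)) + m i" by blast
      define l where "l = (\<lambda>x. l0 x + (if x = y then 1 else (0::real)))"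
      have l: "\<forall>x\<in>profiles. l x \<ge> 0" using l0 by (simp add: l_def)
      have ly: "l y > 0" using l0 y by (simp add: l_def add_nonneg_pos)
      have S: "(\<Sum>x\<in>profiles. l x * (p x * \<phi> x * x i)) = - m i" for i
      proof -
        have "(\<Sum>x\<in>profiles. l x * (p x * \<phi> x * x i)) =
            (\<Sum>x\<in>profiles. l0 x * (p x * \<phi> x * x i)) + (\<Sum>x\<in>profiles. (if x = y then 1 else 0) * (p x * \<phi> x * x i))"
          by (simp add: l_def distrib_right sum.distrib)
        also have "(\<Sum>x\<in>profiles. (if x = y then 1 else 0) * (p x * \<phi> x * x i)) = p y * \<phi> y * y i"
          using y by (simp add: if_distrib[where f="\<lambda>a. a * _"] sum.delta[OF finite_profiles] sum.delta'[OF finite_profiles] cong: if_cong)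
        finally show ?thesis using eq[rule_format, of i] by (simp add: avec_def)
      qed
      note I = improve[OF det l]
      define M where "M = 1 + sum l profiles"
      define \<psi> where "\<psi> = (\<lambda>x. \<phi> x * (1 - l x / M))"
      have M0: "M > 0" using I(1) by (simp add: M_def)
      have "weakly_pareto_pref p \<psi> \<phi>" unfolding weakly_pareto_pref_def
      proof
        fix i
        have "resp p \<psi> i - resp p \<phi> i = - (\<Sum>x\<in>profiles. l x * (p x * \<phi> x * x i)) / (2 * M)"
          using I(3) by (simp add: \<psi>_def M_def)
        also have "\<dots> = m i / (2 * M)" using S[of i] by simp
        also have "\<dots> \<ge> 0" using M0 m by simp
        finally show "resp p \<psi> i \<ge> resp p \<phi> i" by simp
      qed
      moreover have "random_rule \<psi>" using I(2) by (simp add: \<psi>_def M_def)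
      moreover have "\<psi> y \<noteq> \<phi> y" using I(4) y ly by (simp add: \<psi>_def M_def)
      ultimately show False using se y unfolding strictly_efficient_def by blast
    qed
    from alt_lemma[OF finite_gens this] obtain wv where
      wz: "inner wv ?z < 0" and wg: "\<forall>g\<in>gens p \<phi>. inner wv g \<ge> 0" by blast
    have nn: "\<forall>i. wv $ i \<ge> 0" using wg axis_in_gens inner_axis1 by metis
    have "inner wv (avec p \<phi> y) > 0" using wz by simp
    moreover have "\<forall>x\<in>profiles. inner wv (avec p \<phi> x) \<ge> 0" using wg avec_in_gens by blast
    ultimately show ?thesis using nn by blast
  qed
  then obtain W where W: "\<forall>y\<in>profiles. inner (W y) (avec p \<phi> y) > 0 \<and> (\<forall>i. W y $ i \<ge> 0) \<and> (\<forall>x\<in>profiles. inner (W y) (avec p \<phi> x) \<ge> 0)"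
    by metis
  define wv where "wv = (\<Sum>y\<in>profiles. W y)"
  have pos: "inner wv (avec p \<phi> x) > 0" if x: "x \<in> profiles" for x
  proof -
    have "inner (W x) (avec p \<phi> x) \<le> (\<Sum>y\<in>profiles. inner (W y) (avec p \<phi> x))"
      by (rule member_le_sum[OF x]) (use W x finite_profiles in auto)
    then show ?thesis using W x unfolding wv_def inner_sum_left by (meson order_less_le_trans)
  qed
  have nn: "wv $ i \<ge> 0" for i unfolding wv_def using W by (simp add: sum_nonneg)
  have S0: "(\<Sum>i\<in>UNIV. wv $ i * x i) \<noteq> 0" if x: "x \<in> profiles" for x
    using pos[OF x] by (auto simp: inner_avec)
  have "(\<lambda>i. wv $ i) \<noteq> (\<lambda>_. 0)"
  proof
    assume "(\<lambda>i. wv $ i) = (\<lambda>_. 0)"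
    then have "(\<Sum>i\<in>UNIV. wv $ i * (\<lambda>_. 1) i) = 0" by (simp add: fun_eq_iff)
    then show False using S0[OF profiles_ne] by simp
  qed
  moreover have "\<forall>x\<in>profiles. inner wv (avec p \<phi> x) \<ge> 0" using pos by (simp add: less_imp_le)
  ultimately have "weighted_majority (\<lambda>i. wv $ i) \<phi>" using fwd_wm[OF det p0] by blast
  moreover have "no_ties (\<lambda>i. wv $ i)" using S0 by (simp add: no_ties_def)
  ultimately show ?thesis using nn by blast
qed

lemma strict_bwd:
  assumes p0: "\<forall>x\<in>profiles. p x > 0" and wm: "weighted_majority w \<phi>" and nn: "\<forall>i. w i \<ge> 0"
    and nt: "no_ties w"
  shows "strictly_efficient p \<phi>"
  unfolding strictly_efficient_def
proof
  assume "\<exists>\<psi>. random_rule \<psi> \<and> (\<exists>x\<in>profiles. \<psi> x \<noteq> \<phi> x) \<and> weakly_pareto_pref p \<psi> \<phi>"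
  then obtain \<psi> where rr: "random_rule \<psi>" and ex: "\<exists>x\<in>profiles. \<psi> x \<noteq> \<phi> x"
    and wp: "weakly_pareto_pref p \<psi> \<phi>" by blast
  have "0 \<le> (\<Sum>i\<in>UNIV. w i * (resp p \<psi> i - resp p \<phi> i))"
    using nn wp by (intro sum_nonneg) (simp add: weakly_pareto_pref_def)
  then show False using conv_le(2)[OF wm rr p0 nt ex] by simp
qed

theorem propositionB:
  fixes p :: "('i::finite \<Rightarrow> real) \<Rightarrow> real" and \<phi> :: "('i \<Rightarrow> real) \<Rightarrow> real"
  assumes "is_dist p" and "\<forall>x\<in>profiles. p x > 0" and "det_rule \<phi>"
  shows "(strictly_efficient p \<phi> \<longleftrightarrow>
            (\<exists>w. weighted_majority w \<phi> \<and> (\<forall>i. w i \<ge> 0) \<and> no_ties w))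
       \<and> (efficient p \<phi> \<longleftrightarrow> (\<exists>w. weighted_majority w \<phi> \<and> (\<forall>i. w i > 0)))
       \<and> (weakly_efficient p \<phi> \<longleftrightarrow> (\<exists>w. weighted_majority w \<phi> \<and> (\<forall>i. w i \<ge> 0)))"
  using strict_fwd[OF assms(3,2)] strict_bwd[OF assms(2)] eff_fwd[OF assms(3,2)] eff_bwd[OF assms(2)]
    weak_fwd[OF assms(3,2)] weak_bwd[OF assms(2)]
  by blast

end
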